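(* Let $U$ satisfy the standing assumption below with constant $c$. Let $N\ge2$, and let $p$ be a program of length $N$ which has not stopped on $U$ by time $2^{2N+2c+1}$. Then $U(p)$ does not stop exactly at any algorithmically random time $t\ge2^{2N+2c+1}$. That is, if $t_p<\infty$, then $t_p$ is not algorithmically random.
   Context: Strings are binary and $|x|$ is the length of $x$. $\mathrm{bin}:\{1,2,\dots\}\to\Sigma^*$ sends $n$ to its binary expansion with the leading $1$ removed. $U$ is a fixed universal Turing machine, and $\nabla(x)=\min\{n\ge1:U(\mathrm{bin}(n))=x\}$ is the natural complexity of $x$. $t_p$ is the exact step at which $U(p)$ halts, with $t_p=\infty$ if it never halts. A nonempty string $x$ is algorithmically random if $\nabla(x)\ge2^{|x|}/|x|$. A time $t\ge2$ is algorithmically random if $\mathrm{bin}(t)$ is algorithmically random. Standing assumption: there is a computable transformation $p\mapsto time(p)$ and a positive integer constant $c$ such that, for every program $p$: (i) $U(p)$ halts if and only if $U(time(p))$ halts; (ii) $|time(p)|\le|p|+c$; (iii) if $U(p)$ halts, then $U(time(p))=\mathrm{bin}(t_p)$. *)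

theory Defs
  imports Complex_Main
begin

text \<open>Binary strings are bool lists. bin n is the binary expansion of n with the
  leading 1 removed (bin 1 = []); bin 0 is unused and set to [].\<close>
fun bin :: "nat \<Rightarrow> bool list" where
  "bin n = (if n \<le> 1 then [] else bin (n div 2) @ [odd n])"

text \<open>The machine U is modelled abstractly by its output function
  out :: program \<Rightarrow> output option (None = does not halt) and its
  exact halting time function ht (None = never halts, i.e. t_p = infinity).\<close>

definition nabla :: "(bool list \<Rightarrow> bool list option) \<Rightarrow> bool list \<Rightarrow> nat" where
  "nabla out x = (LEAST n. n \<ge> 1 \<and> out (bin n) = Some x)"

definition alg_random :: "(bool list \<Rightarrow> bool list option) \<Rightarrow> bool list \<Rightarrow> bool" where
  "alg_random out x \<longleftrightarrow> x \<noteq> [] \<and>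
     real (nabla out x) \<ge> 2 ^ length x / real (length x)"

definition alg_random_time :: "(bool list \<Rightarrow> bool list option) \<Rightarrow> nat \<Rightarrow> bool" where
  "alg_random_time out t \<longleftrightarrow> t \<ge> 2 \<and> alg_random out (bin t)"

definition time_assumption ::
  "(bool list \<Rightarrow> bool list option) \<Rightarrow> (bool list \<Rightarrow> nat option) \<Rightarrow>
   (bool list \<Rightarrow> bool list) \<Rightarrow> nat \<Rightarrow> bool" where
  "time_assumption out ht time c \<longleftrightarrow> c > 0 \<and>
     (\<forall>p. (out p \<noteq> None \<longleftrightarrow> out (time p) \<noteq> None)
        \<and> length (time p) \<le> length p + c
        \<and> (\<forall>t. ht p = Some t \<longrightarrow> out (time p) = Some (bin t)))"

end

theory Submission
  imports Defs
begin

declare bin.simps[simp del]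

lemma bin_le1: "n \<le> 1 \<Longrightarrow> bin n = []" by (subst bin.simps) simp
lemma bin_gt1: "n > 1 \<Longrightarrow> bin n = bin (n div 2) @ [odd n]" by (subst bin.simps) simp

fun numr :: "bool list \<Rightarrow> nat" where
  "numr [] = 1"
| "numr (b # bs) = 2 * numr bs + (if b then 1 else 0)"

lemma numr_pos: "numr l \<ge> 1"
  by (induction l) auto

lemma numr_bound: "numr l < 2 ^ (length l + 1)"
  by (induction l) auto

lemma bin_numr: "bin (numr (rev q)) = q"
proof (induction q rule: rev_induct)
  case Nil then show ?case by (simp add: bin_le1)
next
  case (snoc b xs)
  have p: "numr (rev xs) \<ge> 1" by (rule numr_pos)
  have "numr (rev (xs @ [b])) = 2 * numr (rev xs) + (if b then 1 else 0)" by simp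
  moreover have "bin (2 * numr (rev xs) + (if b then 1 else 0)) = xs @ [b]"
    using p snoc by (subst bin_gt1) auto
  ultimately show ?case by simp
qed

lemma bin_len: "t \<ge> 1 \<Longrightarrow> 2 ^ length (bin t) \<le> t \<and> t < 2 ^ (length (bin t) + 1)"
proof (induction t rule: bin.induct)
  case (1 n)
  show ?case
  proof (cases "n \<le> 1")
    case True then show ?thesis using 1 by (simp add: bin_le1)
  next
    case False
    then have IH: "2 ^ length (bin (n div 2)) \<le> n div 2 \<and> n div 2 < 2 ^ (length (bin (n div 2)) + 1)"
      using 1 by auto
    have "bin n = bin (n div 2) @ [odd n]" using False by (simp add: bin_gt1)
    then show ?thesis using IH by auto
  qed
qed

lemma pow_ge: "j \<ge> 3 \<Longrightarrow> 2 * j + 1 \<le> (2::nat) ^ j"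
proof (induction j rule: nat_induct_at_least)
  case base then show ?case by simp
next
  case (Suc n) then show ?case by simp
qed

theorem mainTheorem6:
  fixes out :: "bool list \<Rightarrow> bool list option"
    and ht :: "bool list \<Rightarrow> nat option"
    and time :: "bool list \<Rightarrow> bool list"
    and c N :: nat and p :: "bool list"
  assumes halt_consistent: "\<And>q. ht q = None \<longleftrightarrow> out q = None"
    and std: "time_assumption out ht time c"
    and N2: "N \<ge> 2"
    and len: "length p = N"
    and not_stopped: "\<And>t. ht p = Some t \<Longrightarrow> t > 2 ^ (2 * N + 2 * c + 1)"
  shows "\<forall>t. t \<ge> 2 ^ (2 * N + 2 * c + 1) \<and> alg_random_time out t \<longrightarrow> ht p \<noteq> Some t"
proof (intro allI impI notI)
  fix t
  assume A: "t \<ge> 2 ^ (2 * N + 2 * c + 1) \<and> alg_random_time out t" and H: "ht p = Some t"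
  have c0: "c > 0" and lt: "length (time p) \<le> N + c" and o: "out (time p) = Some (bin t)"
    using std H len unfolding time_assumption_def by auto
  define n where "n = numr (rev (time p))"
  have bn: "bin n = time p" unfolding n_def by (rule bin_numr)
  have n1: "n \<ge> 1" unfolding n_def by (rule numr_pos)
  have "n < 2 ^ (length (time p) + 1)" unfolding n_def using numr_bound[of "rev (time p)"] by simp
  also have "\<dots> \<le> 2 ^ (N + c + 1)" using lt by (intro power_increasing) auto
  finally have nlt: "n < 2 ^ (N + c + 1)" .
  have "nabla out (bin t) \<le> n" unfolding nabla_def
    by (rule Least_le) (use n1 bn o in auto)
  with nlt have nab: "nabla out (bin t) < 2 ^ (N + c + 1)" by simp
  define L where "L = length (bin t)"
  define k where "k = N + c + 1"
  have "(1::nat) \<le> 2 ^ (2 * N + 2 * c + 1)" by simp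
  then have t1: "t \<ge> 1" using A by linarith
  have "t < 2 ^ (L + 1)" using bin_len[OF t1] L_def by simp
  then have "(2::nat) ^ (2 * N + 2 * c + 1) < 2 ^ (L + 1)" using A by linarith
  then have "2 * N + 2 * c + 1 < L + 1" using power_less_imp_less_exp by fastforce
  then have Lk: "L \<ge> 2 * k - 1" and k4: "k \<ge> 4" using N2 c0 unfolding k_def by auto
  define j where "j = L - k"
  have j3: "j \<ge> 3" and Ljk: "L = j + k" and Lj: "L \<le> 2 * j + 1"
    using Lk k4 unfolding j_def by auto
  have "2 ^ k * L \<le> 2 ^ k * 2 ^ j" using pow_ge[OF j3] Lj by simp
  also have "\<dots> = (2::nat) ^ L" by (simp add: Ljk power_add)
  finally have key: "2 ^ k * L \<le> (2::nat) ^ L" .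
  have Lpos: "L > 0" using Lk k4 by simp
  have R: "real (nabla out (bin t)) \<ge> 2 ^ L / real L"
    using A unfolding alg_random_time_def alg_random_def L_def by auto
  have nab': "real (nabla out (bin t)) < 2 ^ k"
    using nab unfolding k_def by (metis of_nat_less_iff of_nat_numeral of_nat_power)
  have "real (nabla out (bin t)) * L < 2 ^ k * L"
    using nab' Lpos by simp
  also have "\<dots> \<le> 2 ^ L" using key by (metis of_nat_le_iff of_nat_mult of_nat_numeral of_nat_power)
  finally have "real (nabla out (bin t)) < 2 ^ L / real L" using Lpos by (simp add: field_simps)
  with R show False by simp
qed

end
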